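(* Let $x$ be a stable g-matching with $x\ne x^{\max}$, let $f\in F$, and let $(a(1),c(1)),\dots,(a(k),c(k))$ be pairwise disjoint legal $f$-pairs under $x$ (all $2k$ edges distinct). Then for every $I\subseteq\{1,\dots,k\}$, $$C_f\Big(x_f+\sum_{i=1}^k\mathbf 1^{a(i)}-\sum_{i\in I}\mathbf 1^{c(i)}\Big)=x_f+\sum_{i=1}^k\mathbf 1^{a(i)}-\sum_{i=1}^k\mathbf 1^{c(i)}.$$
   Context: Let $G=(V,E)$ be a finite bipartite graph with color classes $W$ and $F$; the edge joining $w\in W$ and $f\in F$ is written $wf$. Let $b\in\mathbb Z_+^E$ be capacities. For $v\in V$, $E_v$ is the set of edges at $v$, $\mathcal B_v=\{z\in\mathbb Z_+^{E_v}: z\le b|_{E_v}\}$, $\mathbf 1^e$ the unit vector of $e$, $|z|=\sum_e|z(e)|$, $\wedge,\vee$ componentwise min/max. Each $v$ has a choice function $C_v:\mathcal B_v\to\mathcal B_v$ with $C_v(z)\le z$ and, for all $z,z'$: (A1) $z\ge z'\ge C_v(z)\Rightarrow C_v(z')=C_v(z)$; (A2) $z\ge z'\Rightarrow C_v(z)\wedge z'\le C_v(z')$; (A3) $z\ge z'\Rightarrow|C_v(z)|\ge|C_v(z')|$. $z$ is acceptable if $C_v(z)=z$; for distinct acceptable $z,z'$, $z'\prec_v z$ iff $C_v(z\vee z')=z$. $x_v$ = restriction of $x$ to $E_v$. A g-matching is $x\in\mathbb Z_+^E$, $x\le b$, each $x_v$ acceptable; $x\prec_F y$ (distinct) iff $x_f\preceq_f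 y_f$ for all $f\in F$. $e\in E_v$ is interesting for $v$ under acceptable $z$ if some $z'\in\mathcal B_v$ has $z'(e)>z(e)$, $z'(e')=z(e')$ for $e'\neq e$, $C_v(z')(e)>z(e)$; $e=wf$ is interesting for $v\in\{w,f\}$ under a g-matching $x$ if so under $x_v$, and blocks $x$ if interesting for both endpoints; stable g-matchings (no blocking edge) form a finite lattice under $\prec_F$ with maximum $x^{\max}$. For stable $x$, $U_F^+(x)$ is the set of edges $wf$ interesting for $f$ under $x$. A legal $f$-pair under $x$ is $(a,c)$ with $a\in U_F^+(x)\cap E_f$, $c\in E_f\setminus\{a\}$ and $C_f(x_f+\mathbf 1^a)=x_f+\mathbf 1^a-\mathbf 1^c$. *)

theory Defs
  imports Main "HOL-Library.Function_Algebras"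
begin

(* Bipartite graph: color classes are the types 'w (W) and 'f (F); an edge wf is the
   pair (w,f); E is the (finite) edge set.
   Vectors in Z_+^E (resp. Z_+^{E_v}) are functions edge => int, nonnegative and
   zero outside E (resp. E_v). *)

type_synonym ('w,'f) edge = "'w \<times> 'f"
type_synonym ('w,'f) vec = "('w,'f) edge \<Rightarrow> int"
type_synonym ('w,'f) vtx = "'w + 'f"

definition Ev :: "('w,'f) edge set \<Rightarrow> ('w,'f) vtx \<Rightarrow> ('w,'f) edge set" where
  "Ev E v = {e \<in> E. case v of Inl w \<Rightarrow> fst e = w | Inr f \<Rightarrow> snd e = f}"

definition Bv :: "('w,'f) edge set \<Rightarrow> ('w,'f) vec \<Rightarrow> ('w,'f) vtx \<Rightarrow> ('w,'f) vec set" where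
  "Bv E b v = {z. (\<forall>e. e \<notin> Ev E v \<longrightarrow> z e = 0) \<and> (\<forall>e \<in> Ev E v. 0 \<le> z e \<and> z e \<le> b e)}"

definition unitv :: "('w,'f) edge \<Rightarrow> ('w,'f) vec" where
  "unitv e = (\<lambda>e'. if e' = e then 1 else 0)"

definition vnorm :: "('w,'f) edge set \<Rightarrow> ('w,'f) vtx \<Rightarrow> ('w,'f) vec \<Rightarrow> int" where
  "vnorm E v z = (\<Sum>e \<in> Ev E v. \<bar>z e\<bar>)"

definition restr :: "('w,'f) edge set \<Rightarrow> ('w,'f) vtx \<Rightarrow> ('w,'f) vec \<Rightarrow> ('w,'f) vec" where
  "restr E v x = (\<lambda>e. if e \<in> Ev E v then x e else 0)"

(* standing assumptions: finite graph, capacities b in Z_+^E, choice functions with A1-A3 *)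
definition gm_model ::
  "('w,'f) edge set \<Rightarrow> ('w,'f) vec \<Rightarrow> (('w,'f) vtx \<Rightarrow> ('w,'f) vec \<Rightarrow> ('w,'f) vec) \<Rightarrow> bool" where
  "gm_model E b C \<longleftrightarrow> finite E \<and> (\<forall>e. 0 \<le> b e) \<and> (\<forall>e. e \<notin> E \<longrightarrow> b e = 0) \<and>
     (\<forall>v. \<forall>z \<in> Bv E b v. C v z \<in> Bv E b v \<and> C v z \<le> z) \<and>
     (\<forall>v. \<forall>z \<in> Bv E b v. \<forall>z' \<in> Bv E b v.
        (z \<ge> z' \<and> z' \<ge> C v z \<longrightarrow> C v z' = C v z) \<and>
        (z \<ge> z' \<longrightarrow> inf (C v z) z' \<le> C v z') \<and>
        (z \<ge> z' \<longrightarrow> vnorm E v (C v z) \<ge> vnorm E v (C v z')))"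

definition acceptable where
  "acceptable E b C v z \<longleftrightarrow> z \<in> Bv E b v \<and> C v z = z"

definition prec_v where
  "prec_v E b C v z' z \<longleftrightarrow> acceptable E b C v z \<and> acceptable E b C v z' \<and> z \<noteq> z' \<and>
     C v (sup z z') = z"

definition preceq_v where
  "preceq_v E b C v z' z \<longleftrightarrow> z' = z \<or> prec_v E b C v z' z"

definition gmatching where
  "gmatching E b C x \<longleftrightarrow> (\<forall>e. 0 \<le> x e) \<and> (\<forall>e. e \<notin> E \<longrightarrow> x e = 0) \<and> x \<le> b \<and>
     (\<forall>v. acceptable E b C v (restr E v x))"

definition precF where
  "precF E b C x y \<longleftrightarrow> x \<noteq> y \<and>
     (\<forall>f. preceq_v E b C (Inr f) (restr E (Inr f) x) (restr E (Inr f) y))"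

definition interesting_z where
  "interesting_z E b C v z e \<longleftrightarrow> e \<in> Ev E v \<and>
     (\<exists>z' \<in> Bv E b v. z' e > z e \<and> (\<forall>e'. e' \<noteq> e \<longrightarrow> z' e' = z e') \<and> C v z' e > z e)"

definition interesting where
  "interesting E b C v x e \<longleftrightarrow> interesting_z E b C v (restr E v x) e"

definition blocks where
  "blocks E b C e x \<longleftrightarrow> interesting E b C (Inl (fst e)) x e \<and> interesting E b C (Inr (snd e)) x e"

definition stable where
  "stable E b C x \<longleftrightarrow> gmatching E b C x \<and> (\<forall>e \<in> E. \<not> blocks E b C e x)"

definition is_xmax where
  "is_xmax E b C y \<longleftrightarrow> stable E b C y \<and> (\<forall>x. stable E b C x \<and> x \<noteq> y \<longrightarrow> precF E b C x y)"

definition UFplus where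
  "UFplus E b C x = {e \<in> E. interesting E b C (Inr (snd e)) x e}"

definition legal_pair where
  "legal_pair E b C f x a c \<longleftrightarrow> a \<in> UFplus E b C x \<inter> Ev E (Inr f) \<and> c \<in> Ev E (Inr f) - {a} \<and>
     C (Inr f) (restr E (Inr f) x + unitv a) = restr E (Inr f) x + unitv a - unitv c"

end

theory Submission
  imports Defs
begin

lemma sum_fun_apply: "(\<Sum>i\<in>A. (F i :: 'a \<Rightarrow> int)) e = (\<Sum>i\<in>A. F i e)"
  by (induction A rule: infinite_finite_induct) auto

lemma sum_unit_inj:
  assumes "inj_on g A" "finite A"
  shows "(\<Sum>i\<in>A. unitv (g i)) e = (if e \<in> g ` A then 1 else 0)"
proof -
  have "(\<Sum>i\<in>A. unitv (g i)) e = (\<Sum>i\<in>A. if g i = e then 1 else 0)"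
    by (simp add: sum_fun_apply unitv_def eq_commute)
  also have "\<dots> = int (card {i \<in> A. g i = e})"
    using assms(2) by (simp add: sum.If_cases Int_def)
  also have "\<dots> = (if e \<in> g ` A then 1 else 0)"
  proof (cases "e \<in> g ` A")
    case True
    then obtain j where j: "j \<in> A" "g j = e" by auto
    have "{i \<in> A. g i = e} = {j}" using j assms(1) by (auto simp: inj_on_def)
    then show ?thesis using True by simp
  next
    case False
    then have "{i \<in> A. g i = e} = {}" by auto
    then show ?thesis using False by (simp only: card.empty) simp
  qed
  finally show ?thesis .
qed

theorem lemma3p6:
  fixes E :: "('w,'f) edge set" and b :: "('w,'f) vec"
    and C :: "('w,'f) vtx \<Rightarrow> ('w,'f) vec \<Rightarrow> ('w,'f) vec"
    and x xmax :: "('w,'f) vec" and f :: 'f and k :: nat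
    and a c :: "nat \<Rightarrow> ('w,'f) edge" and I :: "nat set"
  assumes "gm_model E b C"
    and "stable E b C x"
    and "is_xmax E b C xmax" and "x \<noteq> xmax"
    and "\<forall>i \<in> {1..k}. legal_pair E b C f x (a i) (c i)"
    and "inj_on a {1..k}" and "inj_on c {1..k}" and "a ` {1..k} \<inter> c ` {1..k} = {}"
    and "I \<subseteq> {1..k}"
  shows "C (Inr f) (restr E (Inr f) x + (\<Sum>i\<in>{1..k}. unitv (a i)) - (\<Sum>i\<in>I. unitv (c i)))
       = restr E (Inr f) x + (\<Sum>i\<in>{1..k}. unitv (a i)) - (\<Sum>i\<in>{1..k}. unitv (c i))"
proof -
  define v where "v = (Inr f :: ('w,'f) vtx)"
  define z where "z = restr E v x"
  define K where "K = {1..k::nat}"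
  define A where "A = a ` K"
  define Cs where "Cs = c ` K"
  define CI where "CI = c ` I"
  define Ev' where "Ev' = Ev E v"
  define Z where "Z = z + (\<Sum>i\<in>K. unitv (a i))"
  define Y where "Y = Z - (\<Sum>i\<in>I. unitv (c i))"
  define T where "T = Z - (\<Sum>i\<in>K. unitv (c i))"
  have fK: "finite K" "finite I" using assms(9) K_def finite_subset by auto
  have injI: "inj_on c I" using assms(7,9) inj_on_subset by blast
  have SA: "\<And>e. (\<Sum>i\<in>K. unitv (a i)) e = (if e \<in> A then 1 else 0)"
    using sum_unit_inj[OF assms(6)[folded K_def] fK(1)] A_def by simp
  have SC: "\<And>e. (\<Sum>i\<in>K. unitv (c i)) e = (if e \<in> Cs then 1 else 0)"
    using sum_unit_inj[OF assms(7)[folded K_def] fK(1)] Cs_def by simp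
  have SI: "\<And>e. (\<Sum>i\<in>I. unitv (c i)) e = (if e \<in> CI then 1 else 0)"
    using sum_unit_inj[OF injI fK(2)] CI_def by simp
  have AC: "A \<inter> Cs = {}" using assms(8) A_def Cs_def K_def by simp
  have CIC: "CI \<subseteq> Cs" using assms(9) CI_def Cs_def K_def by auto
  have Zf: "\<And>e. Z e = z e + (if e \<in> A then 1 else 0)" using SA Z_def by simp
  have Yf: "\<And>e. Y e = z e + (if e \<in> A then 1 else 0) - (if e \<in> CI then 1 else 0)"
    using SI Zf Y_def by simp
  have Tf: "\<And>e. T e = z e + (if e \<in> A then 1 else 0) - (if e \<in> Cs then 1 else 0)"
    using SC Zf T_def by simp
  have M: "finite E" "\<forall>v. \<forall>z \<in> Bv E b v. C v z \<in> Bv E b v \<and> C v z \<le> z"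
    using assms(1) unfolding gm_model_def by blast+
  have A1: "\<And>z z'. z \<in> Bv E b v \<Longrightarrow> z' \<in> Bv E b v \<Longrightarrow> z \<ge> z' \<Longrightarrow> z' \<ge> C v z \<Longrightarrow> C v z' = C v z"
    using assms(1) unfolding gm_model_def by blast
  have A2: "\<And>z z'. z \<in> Bv E b v \<Longrightarrow> z' \<in> Bv E b v \<Longrightarrow> z \<ge> z' \<Longrightarrow> inf (C v z) z' \<le> C v z'"
    using assms(1) unfolding gm_model_def by blast
  have A3: "\<And>z z'. z \<in> Bv E b v \<Longrightarrow> z' \<in> Bv E b v \<Longrightarrow> z \<ge> z' \<Longrightarrow> vnorm E v (C v z) \<ge> vnorm E v (C v z')"
    using assms(1) unfolding gm_model_def by blast
  have zacc: "z \<in> Bv E b v" "C v z = z"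
    using assms(2) unfolding stable_def gmatching_def acceptable_def z_def by auto
  have zB: "\<And>e. e \<notin> Ev' \<Longrightarrow> z e = 0" "\<And>e. e \<in> Ev' \<Longrightarrow> 0 \<le> z e \<and> z e \<le> b e"
    using zacc(1) unfolding Bv_def Ev'_def by auto
  have LP: "\<And>i. i \<in> K \<Longrightarrow> legal_pair E b C f x (a i) (c i)" using assms(5) K_def by auto
  have aI: "\<And>i. i \<in> K \<Longrightarrow> a i \<in> Ev' \<and> z (a i) + 1 \<le> b (a i)"
  proof -
    fix i assume i: "i \<in> K"
    have ai: "a i \<in> Ev'" "interesting E b C v x (a i)"
      using LP[OF i] unfolding legal_pair_def UFplus_def Ev'_def v_def Ev_def by auto
    then obtain z' where z': "z' \<in> Bv E b v" "z' (a i) > z (a i)"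
      unfolding interesting_def interesting_z_def z_def by auto
    then show "a i \<in> Ev' \<and> z (a i) + 1 \<le> b (a i)" using ai(1) unfolding Bv_def Ev'_def by force
  qed
  have zaB: "\<And>i. i \<in> K \<Longrightarrow> z + unitv (a i) \<in> Bv E b v"
  proof -
    fix i assume i: "i \<in> K"
    show "z + unitv (a i) \<in> Bv E b v" using aI[OF i] zB unfolding Bv_def Ev'_def[symmetric]
      by (auto simp: unitv_def)
  qed
  have legC: "\<And>i. i \<in> K \<Longrightarrow> C v (z + unitv (a i)) = z + unitv (a i) - unitv (c i) \<and> c i \<in> Ev' \<and> c i \<noteq> a i"
    using LP unfolding legal_pair_def z_def v_def Ev'_def by auto
  have cI: "\<And>i. i \<in> K \<Longrightarrow> c i \<in> Ev' \<and> z (c i) \<ge> 1"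
  proof -
    fix i assume i: "i \<in> K"
    have "C v (z + unitv (a i)) \<in> Bv E b v" using M(2) zaB[OF i] by blast
    then have "0 \<le> (z + unitv (a i) - unitv (c i)) (c i)"
      using legC[OF i] unfolding Bv_def Ev'_def by auto
    then show "c i \<in> Ev' \<and> z (c i) \<ge> 1" using legC[OF i] by (auto simp: unitv_def)
  qed
  have AE: "A \<subseteq> Ev'" using aI A_def by auto
  have CE: "Cs \<subseteq> Ev'" using cI Cs_def by auto
  have ZB: "Z \<in> Bv E b v" unfolding Bv_def Ev'_def[symmetric]
  proof (intro CollectI conjI allI ballI impI)
    fix e assume "e \<notin> Ev'" then show "Z e = 0" using zB AE Zf by auto
  next
    fix e assume "e \<in> Ev'" then show "0 \<le> Z e" using zB Zf by auto
  next
    fix e assume "e \<in> Ev'" then show "Z e \<le> b e" using zB Zf aI A_def by auto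
  qed
  have Tnn: "\<And>e. 0 \<le> T e"
  proof -
    fix e show "0 \<le> T e"
    proof (cases "e \<in> Cs")
      case True
      then obtain i where i: "i \<in> K" "e = c i" using Cs_def by auto
      have "e \<notin> A" using AC True by auto
      then show ?thesis using cI[OF i(1)] i(2) Tf[of e] True by simp
    next
      case False then show ?thesis using Tf zB by (cases "e \<in> Ev'") auto
    qed
  qed
  have TZ: "T \<le> Z" using Tf Zf by (auto simp: le_fun_def)
  have YZ: "Y \<le> Z" using Yf Zf by (auto simp: le_fun_def)
  have TY: "T \<le> Y" using Tf Yf CIC by (auto simp: le_fun_def)
  have inB: "\<And>W. (\<And>e. 0 \<le> W e) \<Longrightarrow> W \<le> Z \<Longrightarrow> W \<in> Bv E b v"
  proof -
    fix W :: "('w,'f) vec" assume h: "\<And>e. 0 \<le> W e" "W \<le> Z"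
    have hz: "\<And>e. e \<notin> Ev' \<Longrightarrow> Z e = 0" "\<And>e. e \<in> Ev' \<Longrightarrow> Z e \<le> b e"
      using ZB unfolding Bv_def Ev'_def by auto
    have hw: "\<And>e. W e \<le> Z e" using h(2) by (rule le_funD)
    show "W \<in> Bv E b v" unfolding Bv_def Ev'_def[symmetric]
    proof (intro CollectI conjI allI ballI impI)
      fix e assume "e \<notin> Ev'" then show "W e = 0" using h(1)[of e] hw[of e] hz(1)[of e] by simp
    next
      fix e assume "e \<in> Ev'" then show "0 \<le> W e" using h(1)[of e] by simp
    next
      fix e assume "e \<in> Ev'" then show "W e \<le> b e" using hw[of e] hz(2)[of e] by simp
    qed
  qed
  have TB: "T \<in> Bv E b v" using inB Tnn TZ by blast
  have YB: "Y \<in> Bv E b v" proof (rule inB)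
    show "\<And>e. 0 \<le> Y e" using TY Tnn by (meson le_fun_def order_trans)
  qed (rule YZ)
  have CZB: "C v Z \<in> Bv E b v" "C v Z \<le> Z" using M(2) ZB by auto
  have CZT: "C v Z \<le> T"
  proof (unfold le_fun_def, intro allI)
    fix e show "C v Z e \<le> T e"
    proof (cases "e \<in> Cs")
      case False then show ?thesis using le_funD[OF CZB(2), of e] Tf[of e] Zf[of e] by simp
    next
      case True
      then obtain i where i: "i \<in> K" "e = c i" using Cs_def by auto
      have "Z \<ge> z + unitv (a i)" using Zf i A_def by (auto simp: le_fun_def unitv_def)
      then have "inf (C v Z) (z + unitv (a i)) \<le> C v (z + unitv (a i))"
        using A2[OF ZB zaB[OF i(1)]] by blast
      then have "inf (C v Z) (z + unitv (a i)) e \<le> (z + unitv (a i) - unitv (c i)) e"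
        using legC[OF i(1)] le_funD by metis
      then have "min (C v Z e) (z e + unitv (a i) e) \<le> z e + unitv (a i) e - unitv (c i) e"
        by (simp add: inf_min)
      then have "min (C v Z e) (z e) \<le> z e - 1" using i legC[OF i(1)] by (auto simp: unitv_def)
      moreover have "e \<notin> A" using AC True by auto
      ultimately show ?thesis using Tf[of e] True by simp
    qed
  qed
  have fE: "finite Ev'" using M(1) unfolding Ev'_def Ev_def by auto
  have "vnorm E v (C v Z) \<ge> vnorm E v (C v z)"
  proof (rule A3[OF ZB zacc(1)])
    show "z \<le> Z" using Zf by (auto simp: le_fun_def)
  qed
  then have n1: "(\<Sum>e\<in>Ev'. C v Z e) \<ge> (\<Sum>e\<in>Ev'. z e)"
    using zacc CZB(1) unfolding vnorm_def Ev'_def Bv_def by auto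
  have cardAC: "card A = card Cs" using assms(6,7) A_def Cs_def K_def by (simp add: card_image)
  have "(\<Sum>e\<in>Ev'. T e) = (\<Sum>e\<in>Ev'. z e) + (\<Sum>e\<in>Ev'. (if e \<in> A then 1 else 0)) - (\<Sum>e\<in>Ev'. (if e \<in> Cs then 1 else 0))"
    unfolding Tf by (simp add: sum.distrib sum_subtractf)
  also have "\<dots> = (\<Sum>e\<in>Ev'. z e)"
    using AE CE cardAC fE by (simp add: sum.If_cases Int_absorb1 Int_absorb2 inf_commute)
  finally have n2: "(\<Sum>e\<in>Ev'. T e) = (\<Sum>e\<in>Ev'. z e)" .
  have CZeqT: "C v Z = T"
  proof
    fix e show "C v Z e = T e"
    proof (cases "e \<in> Ev'")
      case False then show ?thesis using CZB(1) TB unfolding Bv_def Ev'_def by (cases e) auto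
    next
      case True
      show ?thesis
      proof (rule ccontr)
        assume "C v Z e \<noteq> T e"
        then have "C v Z e < T e" using le_funD[OF CZT, of e] by simp
        then have "(\<Sum>e\<in>Ev'. C v Z e) < (\<Sum>e\<in>Ev'. T e)"
          using sum_strict_mono_ex1[OF fE, of "C v Z" T] le_funD[OF CZT] True by blast
        then show False using n1 n2 by simp
      qed
    qed
  qed
  have "C v Y = C v Z" using A1[OF ZB YB YZ] TY CZeqT by auto
  then show ?thesis using CZeqT unfolding Y_def T_def Z_def z_def v_def K_def by simp
qed

end
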